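(* Let $X$ be a set. For every continuous order-preserving map $f\colon\mathbb{V}^{\mathrm{c}}([0,1]^X)\to[0,1]$ there exist an at most countable set $Y$, a continuous order-preserving map $s\colon[0,1]^Y\to[0,1]$, a family $(h_y\colon[0,1]^X\to[0,1])_{y\in Y}$ of continuous order-preserving maps, and a family $(\otimes_y)_{y\in Y}$ of elements of $\{\Box,\Diamond\}$ such that $f=s\circ\langle\otimes_y\circ\mathbb{V}^{\mathrm{c}}h_y\rangle_{y\in Y}$.
   Context: $[0,1]^X$ carries the product topology and componentwise order; it is a compact ordered space (a compact Hausdorff space with a partial order closed in the square). For a subset $A$ of a poset, $\uparrow A$, $\downarrow A$ are up- and down-closure; $A$ is convex if $a_1\le x\le a_2$ with $a_i\in A$ implies $x\in A$; $\updownarrow A=\uparrow A\cap\downarrow A$. For a compact ordered space $Z$, $\mathbb{V}^{\mathrm{c}}Z$ is the set of closed convex subsets of $Z$ (including $\varnothing$), with topology generated by $\{K\mid K\cap U\neq\varnothing\}$ and $\{K\mid K\subseteq U\}$ for $U$ an open upset or open downset of $Z$, and Egli–Milner order $K\le L$ iff $\uparrow L\subseteq\uparrow K$ and $\downarrow K\subseteq\downarrow L$; for a continuous order-preserving $h$, $\mathbb{V}^{\mathrm{c}}h(K)=\updownarrow h[K]$. $\Box,\Diamond\colon\mathbb{V}^{\mathrm{c}}([0,1])\to[0,1]$ are $K\mapsto\inf K$ and $K\mapsto\sup K$ (with $\inf\varnothing=1$, $\sup\varnothing=0$). $\langle g_y\rangle_{y\in Y}$ denotes the map into the product induced by a family $(g_y)$.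 *)

theory Defs
  imports "HOL-Analysis.Analysis"
begin

text \<open>The cube [0,1]^X, represented by extensional functions (value 0 outside X),
  with the product topology (subspace of the product topology on 'a => real)
  and the componentwise order.\<close>
definition cube :: "'a set \<Rightarrow> ('a \<Rightarrow> real) set" where
  "cube X = {x. (\<forall>i\<in>X. 0 \<le> x i \<and> x i \<le> 1) \<and> (\<forall>i. i \<notin> X \<longrightarrow> x i = 0)}"

definition up_in :: "'b::order set \<Rightarrow> 'b set \<Rightarrow> 'b set" where
  "up_in Z A = {z\<in>Z. \<exists>a\<in>A. a \<le> z}"

definition down_in :: "'b::order set \<Rightarrow> 'b set \<Rightarrow> 'b set" where
  "down_in Z A = {z\<in>Z. \<exists>a\<in>A. z \<le> a}"

definition updown_in :: "'b::order set \<Rightarrow> 'b set \<Rightarrow> 'b set" where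
  "updown_in Z A = up_in Z A \<inter> down_in Z A"

definition is_upset_in :: "'b::order set \<Rightarrow> 'b set \<Rightarrow> bool" where
  "is_upset_in Z U \<longleftrightarrow> U \<subseteq> Z \<and> (\<forall>u\<in>U. \<forall>z\<in>Z. u \<le> z \<longrightarrow> z \<in> U)"

definition is_downset_in :: "'b::order set \<Rightarrow> 'b set \<Rightarrow> bool" where
  "is_downset_in Z U \<longleftrightarrow> U \<subseteq> Z \<and> (\<forall>u\<in>U. \<forall>z\<in>Z. z \<le> u \<longrightarrow> z \<in> U)"

definition order_convex :: "'b::order set \<Rightarrow> bool" where
  "order_convex A \<longleftrightarrow> (\<forall>a1\<in>A. \<forall>a2\<in>A. \<forall>x. a1 \<le> x \<and> x \<le> a2 \<longrightarrow> x \<in> A)"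

definition Vc :: "'b::{order,topological_space} set \<Rightarrow> 'b set set" where
  "Vc Z = {K. K \<subseteq> Z \<and> closedin (top_of_set Z) K \<and> order_convex K}"

definition open_up_or_down :: "'b::{order,topological_space} set \<Rightarrow> 'b set set" where
  "open_up_or_down Z = {U. openin (top_of_set Z) U \<and> (is_upset_in Z U \<or> is_downset_in Z U)}"

definition Vc_top :: "'b::{order,topological_space} set \<Rightarrow> 'b set topology" where
  "Vc_top Z = topology_generated_by
     ({Vc Z} \<union> (\<Union>U\<in>open_up_or_down Z.
        {{K\<in>Vc Z. K \<inter> U \<noteq> {}}, {K\<in>Vc Z. K \<subseteq> U}}))"

definition egli_milner :: "'b::order set \<Rightarrow> 'b set \<Rightarrow> 'b set \<Rightarrow> bool" where
  "egli_milner Z K L \<longleftrightarrow> up_in Z L \<subseteq> up_in Z K \<and> down_in Z K \<subseteq> down_in Z L"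

definition Vc_map :: "('b \<Rightarrow> real) \<Rightarrow> 'b set \<Rightarrow> real set" where
  "Vc_map h K = updown_in {0..1} (h ` K)"

definition box :: "real set \<Rightarrow> real" where
  "box K = (if K = {} then 1 else Inf K)"

definition diamond :: "real set \<Rightarrow> real" where
  "diamond K = (if K = {} then 0 else Sup K)"

end

theory Submission
  imports Defs
begin


lemma cube_Pi: "cube X = Pi\<^sub>E UNIV (\<lambda>i. if i \<in> X then {0..1} else {0::real})"
  by (auto simp: cube_def PiE_def Pi_def extensional_UNIV)

lemma compact_cube: "compact (cube X)"
proof -
  have "compactin (product_topology (\<lambda>_. euclidean) UNIV) (Pi\<^sub>E UNIV (\<lambda>i. if i \<in> X then {0..1} else {0::real}))"
    by (subst compactin_PiE) (auto simp: compactin_euclidean_iff)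
  then show ?thesis unfolding cube_Pi euclidean_product_topology compactin_euclidean_iff .
qed

lemma Vc_compact: "K \<in> Vc (cube X) \<Longrightarrow> compact K"
  unfolding Vc_def closedin_closed using compact_cube compact_Int_closed by blast

lemma Vc_sub: "K \<in> Vc Z \<Longrightarrow> K \<subseteq> Z" by (simp add: Vc_def)

lemma empty_Vc: "{} \<in> Vc Z"
  by (simp add: Vc_def order_convex_def)

definition goodh :: "'a set \<Rightarrow> (('a \<Rightarrow> real) \<Rightarrow> real) \<Rightarrow> bool" where
  "goodh X h \<longleftrightarrow> continuous_on (cube X) h \<and> (\<forall>z\<in>cube X. 0 \<le> h z \<and> h z \<le> 1)
      \<and> (\<forall>u\<in>cube X. \<forall>v\<in>cube X. u \<le> v \<longrightarrow> h u \<le> h v)"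

lemma box_Vc_map:
  assumes "K \<noteq> {}" "\<forall>k\<in>K. 0 \<le> h k \<and> h k \<le> 1"
  shows "box (Vc_map h K) = Inf (h ` K)"
proof -
  let ?W = "Vc_map h K"
  have sub: "h ` K \<subseteq> ?W" using assms(2)
    by (auto simp: Vc_map_def updown_in_def up_in_def down_in_def)
  have ne: "?W \<noteq> {}" using sub assms(1) by blast
  have bW: "bdd_below ?W" by (rule bdd_belowI[of _ 0]) (auto simp: Vc_map_def updown_in_def up_in_def)
  have bK: "bdd_below (h ` K)" by (rule bdd_belowI[of _ 0]) (use assms(2) in auto)
  have 1: "Inf ?W \<le> Inf (h ` K)"
    by (rule cInf_superset_mono) (use assms(1) sub bW in auto)
  have 2: "Inf (h ` K) \<le> Inf ?W"
  proof (rule cInf_greatest[OF ne])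
    fix w assume "w \<in> ?W"
    then obtain a where "a \<in> h ` K" "a \<le> w"
      by (auto simp: Vc_map_def updown_in_def up_in_def)
    then show "Inf (h ` K) \<le> w" using cInf_lower[OF _ bK] by force
  qed
  show ?thesis using 1 2 ne by (simp add: box_def)
qed

lemma diamond_Vc_map:
  assumes "K \<noteq> {}" "\<forall>k\<in>K. 0 \<le> h k \<and> h k \<le> 1"
  shows "diamond (Vc_map h K) = Sup (h ` K)"
proof -
  let ?W = "Vc_map h K"
  have sub: "h ` K \<subseteq> ?W" using assms(2)
    by (auto simp: Vc_map_def updown_in_def up_in_def down_in_def)
  have ne: "?W \<noteq> {}" using sub assms(1) by blast
  have bW: "bdd_above ?W" by (rule bdd_aboveI[of _ 1]) (auto simp: Vc_map_def updown_in_def up_in_def)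
  have bK: "bdd_above (h ` K)" by (rule bdd_aboveI[of _ 1]) (use assms(2) in auto)
  have 1: "Sup (h ` K) \<le> Sup ?W"
    by (rule cSup_subset_mono) (use assms(1) sub bW in auto)
  have 2: "Sup ?W \<le> Sup (h ` K)"
  proof (rule cSup_least[OF ne])
    fix w assume "w \<in> ?W"
    then obtain a where "a \<in> h ` K" "w \<le> a"
      by (auto simp: Vc_map_def updown_in_def down_in_def)
    then show "w \<le> Sup (h ` K)" using cSup_upper[OF _ bK] by force
  qed
  show ?thesis using 1 2 ne by (simp add: diamond_def)
qed

lemma Vc_map_empty: "Vc_map h {} = {}"
  by (simp add: Vc_map_def updown_in_def up_in_def)

lemma box_min:
  assumes "goodh X h" "K \<in> Vc (cube X)" "K \<noteq> {}"
  shows "\<exists>x\<in>K. box (Vc_map h K) = h x \<and> (\<forall>y\<in>K. h x \<le> h y)"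
proof -
  have KZ: "K \<subseteq> cube X" using assms(2) Vc_sub by blast
  have c: "continuous_on K h" using assms(1) KZ continuous_on_subset unfolding goodh_def by blast
  obtain x where x: "x \<in> K" "\<forall>y\<in>K. h x \<le> h y"
    using continuous_attains_inf[OF Vc_compact[OF assms(2)] assms(3) c] by blast
  have "box (Vc_map h K) = Inf (h ` K)"
    by (rule box_Vc_map) (use assms KZ in \<open>auto simp: goodh_def\<close>)
  also have "\<dots> = h x" by (rule cInf_eq_minimum) (use x in auto)
  finally show ?thesis using x by blast
qed

lemma diamond_max:
  assumes "goodh X h" "K \<in> Vc (cube X)" "K \<noteq> {}"
  shows "\<exists>x\<in>K. diamond (Vc_map h K) = h x \<and> (\<forall>y\<in>K. h y \<le> h x)"
proof -
  have KZ: "K \<subseteq> cube X" using assms(2) Vc_sub by blast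
  have c: "continuous_on K h" using assms(1) KZ continuous_on_subset unfolding goodh_def by blast
  obtain x where x: "x \<in> K" "\<forall>y\<in>K. h y \<le> h x"
    using continuous_attains_sup[OF Vc_compact[OF assms(2)] assms(3) c] by blast
  have "diamond (Vc_map h K) = Sup (h ` K)"
    by (rule diamond_Vc_map) (use assms KZ in \<open>auto simp: goodh_def\<close>)
  also have "\<dots> = h x" by (rule cSup_eq_maximum) (use x in auto)
  finally show ?thesis using x by blast
qed

lemma box_range:
  assumes "goodh X h" "K \<in> Vc (cube X)"
  shows "0 \<le> box (Vc_map h K) \<and> box (Vc_map h K) \<le> 1"
proof (cases "K = {}")
  case True then show ?thesis by (simp add: Vc_map_empty box_def)
next
  case False
  then obtain x where "x \<in> K" "box (Vc_map h K) = h x" using box_min[OF assms] by blast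
  then show ?thesis using assms Vc_sub unfolding goodh_def by fastforce
qed

lemma diamond_range:
  assumes "goodh X h" "K \<in> Vc (cube X)"
  shows "0 \<le> diamond (Vc_map h K) \<and> diamond (Vc_map h K) \<le> 1"
proof (cases "K = {}")
  case True then show ?thesis by (simp add: Vc_map_empty diamond_def)
next
  case False
  then obtain x where "x \<in> K" "diamond (Vc_map h K) = h x" using diamond_max[OF assms] by blast
  then show ?thesis using assms Vc_sub unfolding goodh_def by fastforce
qed

lemma box_gt:
  assumes "goodh X h" "K \<in> Vc (cube X)"
  shows "t < box (Vc_map h K) \<longleftrightarrow> t < 1 \<and> (\<forall>k\<in>K. t < h k)"
proof (cases "K = {}")
  case True then show ?thesis by (simp add: Vc_map_empty box_def)
next
  case False
  then obtain x where x: "x \<in> K" "box (Vc_map h K) = h x" "\<forall>y\<in>K. h x \<le> h y" using box_min[OF assms] by blast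
  have "h x \<le> 1" using x(1) assms Vc_sub unfolding goodh_def by fastforce
  then show ?thesis using x by force
qed

lemma box_lt:
  assumes "goodh X h" "K \<in> Vc (cube X)"
  shows "box (Vc_map h K) < t \<longleftrightarrow> 1 < t \<or> (\<exists>k\<in>K. h k < t)"
proof (cases "K = {}")
  case True then show ?thesis by (simp add: Vc_map_empty box_def)
next
  case False
  then obtain x where x: "x \<in> K" "box (Vc_map h K) = h x" "\<forall>y\<in>K. h x \<le> h y" using box_min[OF assms] by blast
  have "h x \<le> 1" using x(1) assms Vc_sub unfolding goodh_def by fastforce
  then show ?thesis using x by force
qed

lemma diamond_gt:
  assumes "goodh X h" "K \<in> Vc (cube X)"
  shows "t < diamond (Vc_map h K) \<longleftrightarrow> t < 0 \<or> (\<exists>k\<in>K. t < h k)"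
proof (cases "K = {}")
  case True then show ?thesis by (simp add: Vc_map_empty diamond_def)
next
  case False
  then obtain x where x: "x \<in> K" "diamond (Vc_map h K) = h x" "\<forall>y\<in>K. h y \<le> h x" using diamond_max[OF assms] by blast
  have "0 \<le> h x" using x(1) assms Vc_sub unfolding goodh_def by fastforce
  then show ?thesis using x by force
qed

lemma diamond_lt:
  assumes "goodh X h" "K \<in> Vc (cube X)"
  shows "diamond (Vc_map h K) < t \<longleftrightarrow> 0 < t \<and> (\<forall>k\<in>K. h k < t)"
proof (cases "K = {}")
  case True then show ?thesis by (simp add: Vc_map_empty diamond_def)
next
  case False
  then obtain x where x: "x \<in> K" "diamond (Vc_map h K) = h x" "\<forall>y\<in>K. h y \<le> h x" using diamond_max[OF assms] by blast
  have "0 \<le> h x" using x(1) assms Vc_sub unfolding goodh_def by fastforce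
  then show ?thesis using x by force
qed


lemma topspace_Vc_top: "topspace (Vc_top Z) = Vc Z"
  unfolding Vc_top_def topology_generated_by_topspace by auto

lemma open_meet: "U \<in> open_up_or_down Z \<Longrightarrow> openin (Vc_top Z) {K\<in>Vc Z. K \<inter> U \<noteq> {}}"
  unfolding Vc_top_def by (rule topology_generated_by_Basis) auto

lemma open_sub: "U \<in> open_up_or_down Z \<Longrightarrow> openin (Vc_top Z) {K\<in>Vc Z. K \<subseteq> U}"
  unfolding Vc_top_def by (rule topology_generated_by_Basis) auto

lemma goodh_up: assumes "goodh X h" shows "{z\<in>cube X. a < h z} \<in> open_up_or_down (cube X)"
proof -
  have "continuous_map (top_of_set (cube X)) euclidean h"
    using assms by (simp add: goodh_def continuous_map_iff_continuous)
  from openin_continuous_map_preimage[OF this, of "{a<..}"]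
  have "openin (top_of_set (cube X)) {z\<in>cube X. a < h z}" by simp
  moreover have "is_upset_in (cube X) {z\<in>cube X. a < h z}"
    unfolding is_upset_in_def
  proof (intro conjI ballI impI)
    fix u z assume u: "u \<in> {z\<in>cube X. a < h z}" and z: "z \<in> cube X" and uz: "u \<le> z"
    have "h u \<le> h z" using assms u z uz unfolding goodh_def by blast
    then show "z \<in> {z\<in>cube X. a < h z}" using u z by simp
  qed auto
  ultimately show ?thesis by (simp add: open_up_or_down_def)
qed

lemma goodh_down: assumes "goodh X h" shows "{z\<in>cube X. h z < a} \<in> open_up_or_down (cube X)"
proof -
  have "continuous_map (top_of_set (cube X)) euclidean h"
    using assms by (simp add: goodh_def continuous_map_iff_continuous)
  from openin_continuous_map_preimage[OF this, of "{..<a}"]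
  have "openin (top_of_set (cube X)) {z\<in>cube X. h z < a}" by simp
  moreover have "is_downset_in (cube X) {z\<in>cube X. h z < a}"
    unfolding is_downset_in_def
  proof (intro conjI ballI impI)
    fix u z assume u: "u \<in> {z\<in>cube X. h z < a}" and z: "z \<in> cube X" and uz: "z \<le> u"
    have "h z \<le> h u" using assms u z uz unfolding goodh_def by blast
    then show "z \<in> {z\<in>cube X. h z < a}" using u z by simp
  qed auto
  ultimately show ?thesis by (simp add: open_up_or_down_def)
qed

definition atom :: "(('a \<Rightarrow> real) \<Rightarrow> real) \<Rightarrow> bool \<Rightarrow> ('a \<Rightarrow> real) set \<Rightarrow> real" where
  "atom h b K = (if b then box else diamond) (Vc_map h K)"

lemma atom_range: "goodh X h \<Longrightarrow> K \<in> Vc (cube X) \<Longrightarrow> 0 \<le> atom h b K \<and> atom h b K \<le> 1"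
  using box_range[of X h K] diamond_range[of X h K] by (simp add: atom_def)

lemma openin_cong_Vc:
  assumes "\<forall>K\<in>Vc Z. Q K \<longleftrightarrow> R K" "openin (Vc_top Z) {K\<in>Vc Z. R K}"
  shows "openin (Vc_top Z) {K\<in>Vc Z. Q K}"
proof -
  have "{K\<in>Vc Z. Q K} = {K\<in>Vc Z. R K}" using assms(1) by blast
  then show ?thesis using assms(2) by simp
qed

lemma openin_Vc_all: "openin (Vc_top Z) {K\<in>Vc Z. True}"
  using openin_topspace[of "Vc_top Z"] by (simp add: topspace_Vc_top)

lemma atom_open_gt:
  assumes h: "goodh X h"
  shows "openin (Vc_top (cube X)) {K \<in> Vc (cube X). a < atom h b K}"
  proof (cases b)
    case True
    show ?thesis
    proof (cases "a < 1")
      case True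
      have "\<forall>K\<in>Vc (cube X). a < atom h b K \<longleftrightarrow> K \<subseteq> {z\<in>cube X. a < h z}"
      proof
        fix K assume K: "K \<in> Vc (cube X)"
        have "K \<subseteq> cube X" using Vc_sub[OF K] .
        then show "a < atom h b K \<longleftrightarrow> K \<subseteq> {z\<in>cube X. a < h z}"
          using \<open>b\<close> True box_gt[OF h K, of a] by (auto simp: atom_def)
      qed
      then show ?thesis using open_sub[OF goodh_up[OF h]] by (rule openin_cong_Vc)
    next
      case False
      have "\<forall>K\<in>Vc (cube X). a < atom h b K \<longleftrightarrow> False"
        using \<open>b\<close> False box_gt[OF h, of _ a] by (simp add: atom_def)
      then show ?thesis by (rule openin_cong_Vc) simp
    qed
  next
    case False
    show ?thesis
    proof (cases "a < 0")
      case True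
      have "\<forall>K\<in>Vc (cube X). a < atom h b K \<longleftrightarrow> True"
        using \<open>\<not>b\<close> True diamond_gt[OF h, of _ a] by (simp add: atom_def)
      then show ?thesis using openin_Vc_all by (rule openin_cong_Vc)
    next
      case F2: False
      have "\<forall>K\<in>Vc (cube X). a < atom h b K \<longleftrightarrow> K \<inter> {z\<in>cube X. a < h z} \<noteq> {}"
      proof
        fix K assume K: "K \<in> Vc (cube X)"
        have "K \<subseteq> cube X" using Vc_sub[OF K] .
        then show "a < atom h b K \<longleftrightarrow> K \<inter> {z\<in>cube X. a < h z} \<noteq> {}"
          using False F2 diamond_gt[OF h K, of a] by (auto simp: atom_def)
      qed
      then show ?thesis using open_meet[OF goodh_up[OF h]] by (rule openin_cong_Vc)
    qed
qed

lemma atom_open_lt: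
  assumes h: "goodh X h"
  shows "openin (Vc_top (cube X)) {K \<in> Vc (cube X). atom h b K < a}"
  proof (cases b)
    case True
    show ?thesis
    proof (cases "1 < a")
      case T2: True
      have "\<forall>K\<in>Vc (cube X). atom h b K < a \<longleftrightarrow> True"
        using True T2 box_lt[OF h, of _ a] by (simp add: atom_def)
      then show ?thesis using openin_Vc_all by (rule openin_cong_Vc)
    next
      case F2: False
      have "\<forall>K\<in>Vc (cube X). atom h b K < a \<longleftrightarrow> K \<inter> {z\<in>cube X. h z < a} \<noteq> {}"
      proof
        fix K assume K: "K \<in> Vc (cube X)"
        have "K \<subseteq> cube X" using Vc_sub[OF K] .
        then show "atom h b K < a \<longleftrightarrow> K \<inter> {z\<in>cube X. h z < a} \<noteq> {}"
          using True F2 box_lt[OF h K, of a] unfolding atom_def by simp blast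
      qed
      then show ?thesis using open_meet[OF goodh_down[OF h]] by (rule openin_cong_Vc)
    qed
  next
    case False
    show ?thesis
    proof (cases "0 < a")
      case True
      have "\<forall>K\<in>Vc (cube X). atom h b K < a \<longleftrightarrow> K \<subseteq> {z\<in>cube X. h z < a}"
      proof
        fix K assume K: "K \<in> Vc (cube X)"
        have "K \<subseteq> cube X" using Vc_sub[OF K] .
        then show "atom h b K < a \<longleftrightarrow> K \<subseteq> {z\<in>cube X. h z < a}"
          using \<open>\<not>b\<close> True diamond_lt[OF h K, of a] unfolding atom_def by simp blast
      qed
      then show ?thesis using open_sub[OF goodh_down[OF h]] by (rule openin_cong_Vc)
    next
      case F2: False
      have "\<forall>K\<in>Vc (cube X). atom h b K < a \<longleftrightarrow> False"
        using False F2 diamond_lt[OF h, of _ a] by (simp add: atom_def)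
      then show ?thesis by (rule openin_cong_Vc) simp
    qed
qed

lemma atom_cont:
  assumes h: "goodh X h"
  shows "continuous_map (Vc_top (cube X)) euclideanreal (atom h b)"
  apply (subst continuous_map_upper_lower_semicontinuous_lt)
  apply (simp only: topspace_Vc_top)
  apply (intro conjI allI)
   apply (rule atom_open_gt[OF h])
  apply (rule atom_open_lt[OF h])
  done

lemma fin_inter_relative:
  assumes "V \<in> S" "\<forall>s\<in>S. s \<subseteq> V"
  shows "(finite intersection_of (\<lambda>x. x\<in>S) relative_to V) = (finite' intersection_of (\<lambda>x. x\<in>S))"
proof (rule ext, rule iffI)
  fix T assume "(finite intersection_of (\<lambda>x. x\<in>S) relative_to V) T"
  then obtain T0 where T0: "(finite intersection_of (\<lambda>x. x\<in>S)) T0" "V \<inter> T0 = T"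
    unfolding relative_to_def by blast
  then obtain U where U: "finite U" "U \<subseteq> Collect (\<lambda>x. x\<in>S)" "\<Inter>U = T0"
    unfolding intersection_of_def by blast
  show "(finite' intersection_of (\<lambda>x. x\<in>S)) T"
  proof (cases "U = {}")
    case True
    then have "T = \<Inter>{V}" using U T0 by simp
    then show ?thesis unfolding intersection_of_def using assms(1)
      by (intro exI[of _ "{V}"]) simp
  next
    case False
    have "\<Inter>U \<subseteq> V" using False U(2) assms(2) by blast
    then have "T = \<Inter>U" using U T0 by blast
    then show ?thesis unfolding intersection_of_def using U False by (intro exI[of _ U]) simp
  qed
next
  fix T assume "(finite' intersection_of (\<lambda>x. x\<in>S)) T"
  then obtain U where U: "finite' U" "U \<subseteq> Collect (\<lambda>x. x\<in>S)" "\<Inter>U = T"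
    unfolding intersection_of_def by blast
  have "\<Inter>U \<subseteq> V" using U(1,2) assms(2) by blast
  then have "V \<inter> T = T" using U by blast
  moreover have "(finite intersection_of (\<lambda>x. x\<in>S)) T"
    unfolding intersection_of_def using U by (intro exI[of _ U]) simp
  ultimately show "(finite intersection_of (\<lambda>x. x\<in>S) relative_to V) T"
    unfolding relative_to_def by blast
qed

lemma convex_cube:
  assumes "a1 \<in> cube X" "a2 \<in> cube X" "a1 \<le> x" "x \<le> a2" shows "x \<in> cube X"
proof -
  have l: "a1 i \<le> x i" "x i \<le> a2 i" for i using assms(3,4) by (auto simp: le_fun_def)
  have c1: "0 \<le> a1 i" "a2 i \<le> 1" if "i \<in> X" for i using assms(1,2) that by (simp_all add: cube_def)
  have z: "a1 i = 0" "a2 i = 0" if "i \<notin> X" for i using assms(1,2) that by (simp_all add: cube_def)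
  show ?thesis unfolding cube_def mem_Collect_eq
  proof (intro conjI ballI allI impI)
    fix i assume i: "i \<in> X"
    show "0 \<le> x i" using l(1)[of i] c1(1)[OF i] by linarith
    show "x i \<le> 1" using l(2)[of i] c1(2)[OF i] by linarith
  next
    fix i assume i: "i \<notin> X"
    show "x i = 0" using l[of i] z[OF i] by linarith
  qed
qed

lemma Vc_compact_space: "compact_space (Vc_top (cube X))"
proof -
  define Z where "Z = cube X"
  define V where "V = Vc Z"
  define S where "S = ({V} \<union> (\<Union>U\<in>open_up_or_down Z.
        {{K\<in>V. K \<inter> U \<noteq> {}}, {K\<in>V. K \<subseteq> U}}))"
  have VT: "Vc_top Z = topology_generated_by S" by (simp add: Vc_top_def S_def V_def)
  have US: "\<Union>S = V" unfolding S_def by blast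
  have VS: "V \<in> S" unfolding S_def by blast
  have sV: "\<forall>s\<in>S. s \<subseteq> V" unfolding S_def by blast
  show ?thesis unfolding Z_def[symmetric]
  proof (rule Alexander_subbase[where \<B> = S])
    show "topology (arbitrary union_of (finite intersection_of (\<lambda>x. x \<in> S) relative_to \<Union> S)) = Vc_top Z"
      unfolding VT US generate_topology_on_eq fin_inter_relative[OF VS sV] ..
  next
    fix C assume CS: "C \<subseteq> S" and UC: "\<Union>C = topspace (Vc_top Z)"
    have UC': "\<Union>C = V" using UC by (simp add: topspace_Vc_top V_def)
    show "\<exists>C'. finite C' \<and> C' \<subseteq> C \<and> \<Union>C' = topspace (Vc_top Z)"
    proof (cases "V \<in> C")
      case True
      then show ?thesis by (intro exI[of _ "{V}"]) (auto simp: topspace_Vc_top V_def)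
    next
      case False
      define A where "A = {U\<in>open_up_or_down Z. {K\<in>V. K \<inter> U \<noteq> {}} \<in> C}"
      define B where "B = {W\<in>open_up_or_down Z. {K\<in>V. K \<subseteq> W} \<in> C}"
      have Cform: "(\<exists>U\<in>A. c = {K\<in>V. K \<inter> U \<noteq> {}}) \<or> (\<exists>W\<in>B. c = {K\<in>V. K \<subseteq> W})" if c: "c \<in> C" for c
      proof -
        have "c \<in> S" using c CS by blast
        moreover have "c \<noteq> V" using c False by blast
        ultimately obtain U where U: "U \<in> open_up_or_down Z" "c = {K\<in>V. K \<inter> U \<noteq> {}} \<or> c = {K\<in>V. K \<subseteq> U}"
          unfolding S_def by blast
        from U(2) show ?thesis
        proof
          assume "c = {K\<in>V. K \<inter> U \<noteq> {}}"
          then have "U \<in> A" using U(1) c by (simp add: A_def)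
          then show ?thesis using \<open>c = _\<close> by blast
        next
          assume "c = {K\<in>V. K \<subseteq> U}"
          then have "U \<in> B" using U(1) c by (simp add: B_def)
          then show ?thesis using \<open>c = _\<close> by blast
        qed
      qed
      define A0 where "A0 = Z - \<Union>A"
      have Aop: "openin (top_of_set Z) U" if "U \<in> A" for U using that by (simp add: A_def open_up_or_down_def)
      have "openin (top_of_set Z) (\<Union>A)" using Aop by (rule openin_Union) 
      then have cl: "closedin (top_of_set Z) A0" unfolding A0_def
        using closedin_diff[of "top_of_set Z" Z "\<Union>A"] by simp
      have cv: "order_convex A0"
        unfolding order_convex_def
      proof (intro ballI allI impI)
        fix a1 a2 x assume a: "a1 \<in> A0" "a2 \<in> A0" "a1 \<le> x \<and> x \<le> a2"
        have a1: "a1 \<in> Z" "a1 \<notin> \<Union>A" and a2: "a2 \<in> Z" "a2 \<notin> \<Union>A" using a(1,2) by (simp_all add: A0_def)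
        have xZ: "x \<in> Z" using convex_cube[of a1 X a2 x] a1(1) a2(1) a(3) by (simp add: Z_def)
        have "x \<notin> U" if UA: "U \<in> A" for U
        proof
          assume xU: "x \<in> U"
          have "U \<in> open_up_or_down Z" using UA by (simp add: A_def)
          then have "is_upset_in Z U \<or> is_downset_in Z U" by (simp add: open_up_or_down_def)
          then show False
          proof
            assume "is_upset_in Z U"
            then have "a2 \<in> U" using xU a(3) a2(1) unfolding is_upset_in_def by blast
            then show False using a2(2) UA by blast
          next
            assume "is_downset_in Z U"
            then have "a1 \<in> U" using xU a(3) a1(1) unfolding is_downset_in_def by blast
            then show False using a1(2) UA by blast
          qed
        qed
        then show "x \<in> A0" using xZ by (auto simp: A0_def)
      qed
      have "A0 \<subseteq> Z" by (simp add: A0_def)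
      then have A0V: "A0 \<in> V" using cl cv by (simp add: V_def Vc_def)
      then obtain c where c: "c \<in> C" "A0 \<in> c" using UC' by blast
      have notA: "\<not> (\<exists>U\<in>A. c = {K\<in>V. K \<inter> U \<noteq> {}})"
      proof
        assume "\<exists>U\<in>A. c = {K\<in>V. K \<inter> U \<noteq> {}}"
        then obtain U where "U \<in> A" "c = {K\<in>V. K \<inter> U \<noteq> {}}" by blast
        then have "A0 \<inter> U \<noteq> {}" using c(2) by simp
        then show False using \<open>U \<in> A\<close> unfolding A0_def by blast
      qed
      then obtain W where W: "W \<in> B" "c = {K\<in>V. K \<subseteq> W}" using Cform[OF c(1)] by blast
      have A0W: "A0 \<subseteq> W" using c(2) W(2) by simp
      have WZ: "openin (top_of_set Z) W" using W by (simp add: B_def open_up_or_down_def)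
      then obtain Ob where O: "open Ob" "W = Z \<inter> Ob" by (auto simp: openin_open)
      have "compact (Z - Ob)" using compact_diff[OF _ O(1)] compact_cube unfolding Z_def by blast
      moreover have "Z - W = Z - Ob" using O(2) by blast
      ultimately have cZW: "compactin (top_of_set Z) (Z - W)"
        by (simp add: compactin_subtopology compactin_euclidean_iff)
      have cov: "Z - W \<subseteq> \<Union>A" using A0W unfolding A0_def by blast
      have "\<exists>F. finite F \<and> F \<subseteq> A \<and> Z - W \<subseteq> \<Union>F"
        using cZW Aop cov unfolding compactin_def by blast
      then obtain F where F: "finite F" "F \<subseteq> A" "Z - W \<subseteq> \<Union>F" by blast
      define C' where "C' = insert {K\<in>V. K \<subseteq> W} ((\<lambda>U. {K\<in>V. K \<inter> U \<noteq> {}}) ` F)"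
      have "finite C'" using F by (simp add: C'_def)
      moreover have "C' \<subseteq> C"
      proof -
        have "{K\<in>V. K \<subseteq> W} \<in> C" using W(1) by (simp add: B_def)
        moreover have "{K\<in>V. K \<inter> U \<noteq> {}} \<in> C" if "U \<in> F" for U using that F(2) by (auto simp: A_def)
        ultimately show ?thesis by (auto simp: C'_def)
      qed
      moreover have "\<Union>C' = V"
      proof
        show "\<Union>C' \<subseteq> V" by (auto simp: C'_def)
        show "V \<subseteq> \<Union>C'"
        proof
          fix K assume KV: "K \<in> V"
          show "K \<in> \<Union>C'"
          proof (cases "K \<subseteq> W")
            case True then show ?thesis using KV by (auto simp: C'_def)
          next
            case False
            then obtain k where k: "k \<in> K" "k \<notin> W" by blast
            have "k \<in> Z" using k(1) Vc_sub[of K Z] KV unfolding V_def by blast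
            then obtain U where "U \<in> F" "k \<in> U" using F(3) k(2) by blast
            then have "K \<in> {K\<in>V. K \<inter> U \<noteq> {}}" using KV k(1) by blast
            then show ?thesis using \<open>U \<in> F\<close> by (auto simp: C'_def)
          qed
        qed
      qed
      ultimately show ?thesis by (auto simp: topspace_Vc_top V_def)
    qed
  qed
qed


lemma cont_proj: "continuous_on S (\<lambda>u::'i \<Rightarrow> real. u i)"
proof -
  have "continuous_map (product_topology (\<lambda>_. euclidean) UNIV) euclidean (\<lambda>u::'i \<Rightarrow> real. u i)"
    by (rule continuous_map_product_projection) simp
  then have "continuous_map euclidean euclidean (\<lambda>u::'i \<Rightarrow> real. u i)"
    by (simp add: euclidean_product_topology)
  then show ?thesis
    by (metis continuous_map_from_subtopology continuous_map_iff_continuous)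
qed

lemma open_coord_gt: "open {z::'i\<Rightarrow>real. b < z i}"
  using open_Collect_less[of "\<lambda>_. b" "\<lambda>z::'i\<Rightarrow>real. z i"] cont_proj[of UNIV] by simp

lemma open_coord_lt: "open {z::'i\<Rightarrow>real. z i < b}"
  using open_Collect_less[of "\<lambda>z::'i\<Rightarrow>real. z i" "\<lambda>_. b"] cont_proj[of UNIV] by simp

definition clip :: "real \<Rightarrow> real" where "clip t = max 0 (min 1 t)"

lemma clip_cont: "continuous_on S g \<Longrightarrow> continuous_on S (\<lambda>x. clip (g x))"
  unfolding clip_def by (intro continuous_intros) auto

lemma clip_mono: "s \<le> t \<Longrightarrow> clip s \<le> clip t" by (simp add: clip_def)
lemma clip_range: "0 \<le> clip t \<and> clip t \<le> 1" by (simp add: clip_def)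

lemma sep_up:
  fixes C :: "('a \<Rightarrow> real) set"
  assumes "compact C" "\<forall>c\<in>C. \<not> c \<le> p"
  shows "\<exists>h. goodh X h \<and> h p = 0 \<and> (\<forall>c\<in>C. h c = 1)"
proof -
  define I where "I c = (SOME i. p i < c i)" for c
  have I: "p (I c) < c (I c)" if "c \<in> C" for c
  proof -
    have "\<exists>i. p i < c i" using assms(2) that by (auto simp: le_fun_def not_le)
    then show ?thesis unfolding I_def by (rule someI_ex)
  qed
  define b where "b c = (p (I c) + c (I c)) / 2" for c
  have cov: "C \<subseteq> \<Union> ((\<lambda>c. {z. b c < z (I c)}) ` C)"
  proof
    fix c assume c: "c \<in> C"
    then have "b c < c (I c)" using I[OF c] by (simp add: b_def)
    then show "c \<in> \<Union> ((\<lambda>c. {z. b c < z (I c)}) ` C)" using c by blast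
  qed
  obtain D where D: "D \<subseteq> C" "finite D" "C \<subseteq> \<Union> ((\<lambda>c. {z. b c < z (I c)}) ` D)"
  proof (rule compactE_image[OF assms(1) _ cov])
    show "\<And>T. T \<in> C \<Longrightarrow> open {z. b T < z (I T)}" by (rule open_coord_gt)
  next
    fix C' assume "C' \<subseteq> C" "finite C'" "C \<subseteq> \<Union> ((\<lambda>c. {z. b c < z (I c)}) ` C')"
    then show thesis using that by blast
  qed
  define h where "h z = min 1 (\<Sum>d\<in>D. clip ((z (I d) - p (I d)) / (b d - p (I d))))" for z
  have pos: "0 < b d - p (I d)" if "d \<in> D" for d using I[of d] that D(1) by (auto simp: b_def)
  have cont: "continuous_on (cube X) h"
    unfolding h_def by (intro continuous_intros clip_cont cont_proj) (auto dest: pos)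
  have mono: "h u \<le> h v" if "u \<le> v" for u v
  proof -
    have "(\<Sum>d\<in>D. clip ((u (I d) - p (I d)) / (b d - p (I d)))) \<le> (\<Sum>d\<in>D. clip ((v (I d) - p (I d)) / (b d - p (I d))))"
    proof (rule sum_mono)
      fix d assume d: "d \<in> D"
      have "u (I d) \<le> v (I d)" using that by (simp add: le_fun_def)
      then show "clip ((u (I d) - p (I d)) / (b d - p (I d))) \<le> clip ((v (I d) - p (I d)) / (b d - p (I d)))"
        using pos[OF d] by (intro clip_mono divide_right_mono) auto
    qed
    then show ?thesis by (simp add: h_def)
  qed
  have rng: "0 \<le> h z \<and> h z \<le> 1" for z
    unfolding h_def using clip_range by (simp add: sum_nonneg)
  have hp: "h p = 0" unfolding h_def by (simp add: clip_def)
  have hc: "h c = 1" if c: "c \<in> C" for c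
  proof -
    obtain d where d: "d \<in> D" "b d < c (I d)" using D(3) c by blast
    have "1 < (c (I d) - p (I d)) / (b d - p (I d))" using pos[OF d(1)] d(2) by simp
    then have t1: "clip ((c (I d) - p (I d)) / (b d - p (I d))) = 1" by (simp add: clip_def)
    have "clip ((c (I d) - p (I d)) / (b d - p (I d))) \<le> (\<Sum>d\<in>D. clip ((c (I d) - p (I d)) / (b d - p (I d))))"
      by (rule member_le_sum) (use d D(2) clip_range in auto)
    then show ?thesis using t1 by (simp add: h_def)
  qed
  show ?thesis using cont mono rng hp hc by (intro exI[of _ h]) (auto simp: goodh_def)
qed

lemma sep_down:
  fixes C :: "('a \<Rightarrow> real) set"
  assumes "compact C" "\<forall>c\<in>C. \<not> p \<le> c"
  shows "\<exists>h. goodh X h \<and> h p = 1 \<and> (\<forall>c\<in>C. h c = 0)"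
proof -
  define I where "I c = (SOME i. c i < p i)" for c
  have I: "c (I c) < p (I c)" if "c \<in> C" for c
  proof -
    have "\<exists>i. c i < p i" using assms(2) that by (auto simp: le_fun_def not_le)
    then show ?thesis unfolding I_def by (rule someI_ex)
  qed
  define b where "b c = (p (I c) + c (I c)) / 2" for c
  have cov: "C \<subseteq> \<Union> ((\<lambda>c. {z. z (I c) < b c}) ` C)"
  proof
    fix c assume c: "c \<in> C"
    then have "c (I c) < b c" using I[OF c] by (simp add: b_def)
    then show "c \<in> \<Union> ((\<lambda>c. {z. z (I c) < b c}) ` C)" using c by blast
  qed
  obtain D where D: "D \<subseteq> C" "finite D" "C \<subseteq> \<Union> ((\<lambda>c. {z. z (I c) < b c}) ` D)"
  proof (rule compactE_image[OF assms(1) _ cov])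
    show "\<And>T. T \<in> C \<Longrightarrow> open {z. z (I T) < b T}" by (rule open_coord_lt)
  next
    fix C' assume "C' \<subseteq> C" "finite C'" "C \<subseteq> \<Union> ((\<lambda>c. {z. z (I c) < b c}) ` C')"
    then show thesis using that by blast
  qed
  define h where "h z = 1 - min 1 (\<Sum>d\<in>D. clip ((p (I d) - z (I d)) / (p (I d) - b d)))" for z
  have pos: "0 < p (I d) - b d" if "d \<in> D" for d using I[of d] that D(1) by (auto simp: b_def)
  have cont: "continuous_on (cube X) h"
    unfolding h_def by (intro continuous_intros clip_cont cont_proj) (auto dest: pos)
  have mono: "h u \<le> h v" if "u \<le> v" for u v
  proof -
    have "(\<Sum>d\<in>D. clip ((p (I d) - v (I d)) / (p (I d) - b d))) \<le> (\<Sum>d\<in>D. clip ((p (I d) - u (I d)) / (p (I d) - b d)))"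
    proof (rule sum_mono)
      fix d assume d: "d \<in> D"
      have "u (I d) \<le> v (I d)" using that by (simp add: le_fun_def)
      then show "clip ((p (I d) - v (I d)) / (p (I d) - b d)) \<le> clip ((p (I d) - u (I d)) / (p (I d) - b d))"
        using pos[OF d] by (intro clip_mono divide_right_mono) auto
    qed
    then show ?thesis by (simp add: h_def)
  qed
  have rng: "0 \<le> h z \<and> h z \<le> 1" for z
    unfolding h_def using clip_range by (simp add: sum_nonneg)
  have hp: "h p = 1" unfolding h_def by (simp add: clip_def)
  have hc: "h c = 0" if c: "c \<in> C" for c
  proof -
    obtain d where d: "d \<in> D" "c (I d) < b d" using D(3) c by blast
    have "1 < (p (I d) - c (I d)) / (p (I d) - b d)" using pos[OF d(1)] d(2) by simp
    then have t1: "clip ((p (I d) - c (I d)) / (p (I d) - b d)) = 1" by (simp add: clip_def)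
    have "clip ((p (I d) - c (I d)) / (p (I d) - b d)) \<le> (\<Sum>d\<in>D. clip ((p (I d) - c (I d)) / (p (I d) - b d)))"
      by (rule member_le_sum) (use d D(2) clip_range in auto)
    then show ?thesis using t1 by (simp add: h_def)
  qed
  show ?thesis using cont mono rng hp hc by (intro exI[of _ h]) (auto simp: goodh_def)
qed

lemma sep_atom:
  assumes K: "K \<in> Vc (cube X)" and L: "L \<in> Vc (cube X)" and ne: "\<not> egli_milner (cube X) K L"
  shows "\<exists>h b. goodh X h \<and> atom h b K = 1 \<and> atom h b L = 0"
proof (cases "up_in (cube X) L \<subseteq> up_in (cube X) K")
  case False
  then obtain z l where zl: "l \<in> L" "l \<le> z" "\<not> (\<exists>k\<in>K. k \<le> z)"
    by (auto simp: up_in_def)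
  have "\<forall>k\<in>K. \<not> k \<le> l"
  proof (intro ballI notI)
    fix k assume k: "k \<in> K" "k \<le> l"
    then have "k \<le> z" using zl(2) by (rule_tac order_trans) auto
    then show False using zl(3) k(1) by blast
  qed
  then obtain h where h: "goodh X h" "h l = 0" "\<forall>k\<in>K. h k = 1"
    using sep_up[OF Vc_compact[OF K]] by blast
  have b1: "box (Vc_map h K) = 1"
  proof -
    have r: "box (Vc_map h K) \<le> 1" using box_range[OF h(1) K] by simp
    show ?thesis
    proof (rule ccontr)
      assume "box (Vc_map h K) \<noteq> 1"
      then have "box (Vc_map h K) < 1" using r by simp
      then show False using box_gt[OF h(1) K, of "box (Vc_map h K)"] h(3) by simp
    qed
  qed
  have b0: "box (Vc_map h L) = 0"
  proof -
    have r: "0 \<le> box (Vc_map h L)" using box_range[OF h(1) L] by simp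
    show ?thesis
    proof (rule ccontr)
      assume "box (Vc_map h L) \<noteq> 0"
      then have "0 < box (Vc_map h L)" using r by simp
      then show False using box_lt[OF h(1) L, of "box (Vc_map h L)"] h(2) zl(1) by auto
    qed
  qed
  show ?thesis using h b1 b0 by (intro exI[of _ h] exI[of _ True]) (simp add: atom_def)
next
  case True
  then have "\<not> down_in (cube X) K \<subseteq> down_in (cube X) L" using ne by (simp add: egli_milner_def)
  then obtain z k where zk: "k \<in> K" "z \<le> k" "\<not> (\<exists>l\<in>L. z \<le> l)"
    by (auto simp: down_in_def)
  have "\<forall>l\<in>L. \<not> k \<le> l"
  proof (intro ballI notI)
    fix l assume l: "l \<in> L" "k \<le> l"
    then have "z \<le> l" using zk(2) by (rule_tac order_trans) auto
    then show False using zk(3) l(1) by blast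
  qed
  then obtain h where h: "goodh X h" "h k = 1" "\<forall>l\<in>L. h l = 0"
    using sep_down[OF Vc_compact[OF L]] by blast
  have b1: "diamond (Vc_map h K) = 1"
  proof -
    have r: "diamond (Vc_map h K) \<le> 1" using diamond_range[OF h(1) K] by simp
    show ?thesis
    proof (rule ccontr)
      assume "diamond (Vc_map h K) \<noteq> 1"
      then have "diamond (Vc_map h K) < 1" using r by simp
      then show False using diamond_gt[OF h(1) K, of "diamond (Vc_map h K)"] h(2) zk(1) by auto
    qed
  qed
  have b0: "diamond (Vc_map h L) = 0"
  proof -
    have r: "0 \<le> diamond (Vc_map h L)" using diamond_range[OF h(1) L] by simp
    show ?thesis
    proof (rule ccontr)
      assume "diamond (Vc_map h L) \<noteq> 0"
      then have "0 < diamond (Vc_map h L)" using r by simp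
      then show False using diamond_lt[OF h(1) L, of "diamond (Vc_map h L)"] h(3) by simp
    qed
  qed
  show ?thesis using h b1 b0 by (intro exI[of _ h] exI[of _ False]) (simp add: atom_def)
qed


definition goods :: "((nat \<Rightarrow> real) \<Rightarrow> real) \<Rightarrow> bool" where
  "goods \<sigma> \<longleftrightarrow> continuous_on (cube (UNIV::nat set)) \<sigma> \<and> (\<forall>u\<in>cube UNIV. 0 \<le> \<sigma> u \<and> \<sigma> u \<le> 1)
     \<and> (\<forall>u\<in>cube UNIV. \<forall>v\<in>cube UNIV. u \<le> v \<longrightarrow> \<sigma> u \<le> \<sigma> v)"

definition rep :: "'a set \<Rightarrow> (('a \<Rightarrow> real) set \<Rightarrow> real) \<Rightarrow> bool" where
  "rep X F \<longleftrightarrow> (\<exists>hs bs \<sigma>. (\<forall>j::nat. goodh X (hs j)) \<and> goods \<sigma>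
       \<and> (\<forall>K\<in>Vc (cube X). F K = \<sigma> (\<lambda>j. atom (hs j) (bs j) K)))"

lemma cubeU: "u \<in> cube (UNIV::'i set) \<longleftrightarrow> (\<forall>i. 0 \<le> u i \<and> u i \<le> 1)"
  by (simp add: cube_def)

lemma atoms_cube:
  assumes "\<forall>j. goodh X (hs j)" "K \<in> Vc (cube X)"
  shows "(\<lambda>j. atom (hs j) (bs j) K) \<in> cube UNIV"
  unfolding cubeU using atom_range[OF assms(1)[rule_format] assms(2)] by blast

lemma goodh_const: "0 \<le> c \<Longrightarrow> c \<le> 1 \<Longrightarrow> goodh X (\<lambda>_. c)"
  by (simp add: goodh_def)

lemma reidx_cont: "continuous_on S (\<lambda>u::nat\<Rightarrow>real. (\<lambda>j. u (g j)))"
proof -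
  have "continuous_map (top_of_set S) (product_topology (\<lambda>_. euclidean) UNIV) (\<lambda>u::nat\<Rightarrow>real. (\<lambda>j. u (g j)))"
    unfolding continuous_map_componentwise_UNIV continuous_map_iff_continuous by (intro allI) (rule cont_proj)
  then show ?thesis by (simp add: euclidean_product_topology continuous_map_iff_continuous)
qed

lemma reidx_cube: "u \<in> cube (UNIV::nat set) \<Longrightarrow> (\<lambda>j. u (g j)) \<in> cube (UNIV::nat set)"
  by (simp add: cubeU)

lemma reidx_le: "(u::nat\<Rightarrow>real) \<le> v \<Longrightarrow> (\<lambda>j. u (g j)) \<le> (\<lambda>j. v (g j))"
  by (simp add: le_fun_def)

lemma rep_const: assumes "0 \<le> c" "c \<le> 1" shows "rep X (\<lambda>K. c)"
  unfolding rep_def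
  by (rule exI[of _ "\<lambda>_ _. 0"], rule exI[of _ "\<lambda>_. True"], rule exI[of _ "\<lambda>_. c"])
     (use assms in \<open>simp add: goodh_def goods_def\<close>)

lemma rep_affine:
  assumes h: "goodh X h" and a: "0 \<le> a" "0 \<le> c" "a + c \<le> 1"
  shows "rep X (\<lambda>K. a + c * atom h b K)"
  unfolding rep_def
proof (rule exI[of _ "\<lambda>_. h"], rule exI[of _ "\<lambda>_. b"], rule exI[of _ "\<lambda>u. a + c * u 0"], intro conjI)
  show "\<forall>j::nat. goodh X h" using h by simp
  have cont: "continuous_on (cube UNIV) (\<lambda>u::nat\<Rightarrow>real. a + c * u 0)"
    by (intro continuous_intros cont_proj)
  have rng: "0 \<le> a + c * u 0 \<and> a + c * u 0 \<le> 1" if "u \<in> cube (UNIV::nat set)" for u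
  proof -
    have "0 \<le> u 0" "u 0 \<le> 1" using that by (auto simp: cubeU)
    then have "0 \<le> c * u 0" "c * u 0 \<le> c" using a by (auto simp: mult_left_le)
    then show ?thesis using a by linarith
  qed
  have mono: "a + c * u 0 \<le> a + c * v 0" if "u \<le> v" for u v :: "nat \<Rightarrow> real"
    using that a by (simp add: le_fun_def mult_left_mono)
  show "goods (\<lambda>u. a + c * u 0)" using cont rng mono by (simp add: goods_def)
  show "\<forall>K\<in>Vc (cube X). a + c * atom h b K = a + c * (\<lambda>j. atom ((\<lambda>_. h) j) ((\<lambda>_. b) j) K) 0"
    by simp
qed

lemma rep_bin:
  assumes F: "rep X F" and G: "rep X G"
    and rng: "\<And>x y. 0 \<le> x \<Longrightarrow> x \<le> 1 \<Longrightarrow> 0 \<le> y \<Longrightarrow> y \<le> 1 \<Longrightarrow> 0 \<le> \<phi> x y \<and> \<phi> x y \<le> 1"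
    and mon: "\<And>x y x' y'. x \<le> x' \<Longrightarrow> y \<le> y' \<Longrightarrow> \<phi> x y \<le> \<phi> x' y'"
    and cnt: "\<And>(f::(nat\<Rightarrow>real)\<Rightarrow>real) g S. continuous_on S f \<Longrightarrow> continuous_on S g \<Longrightarrow> continuous_on S (\<lambda>u. \<phi> (f u) (g u))"
  shows "rep X (\<lambda>K. \<phi> (F K) (G K))"
proof -
  obtain hs1 bs1 \<sigma>1 where 1: "\<forall>j::nat. goodh X (hs1 j)" "goods \<sigma>1" "\<forall>K\<in>Vc (cube X). F K = \<sigma>1 (\<lambda>j. atom (hs1 j) (bs1 j) K)"
    using F unfolding rep_def by blast
  obtain hs2 bs2 \<sigma>2 where 2: "\<forall>j::nat. goodh X (hs2 j)" "goods \<sigma>2" "\<forall>K\<in>Vc (cube X). G K = \<sigma>2 (\<lambda>j. atom (hs2 j) (bs2 j) K)"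
    using G unfolding rep_def by blast
  define hs where "hs j = (if even j then hs1 (j div 2) else hs2 (j div 2))" for j :: nat
  define bs where "bs j = (if even j then bs1 (j div 2) else bs2 (j div 2))" for j :: nat
  define \<sigma> where "\<sigma> u = \<phi> (\<sigma>1 (\<lambda>j. u (2*j))) (\<sigma>2 (\<lambda>j. u (2*j+1)))" for u :: "nat \<Rightarrow> real"
  have hs: "\<forall>j. goodh X (hs j)" using 1(1) 2(1) by (simp add: hs_def)
  have c1: "continuous_on (cube UNIV) (\<lambda>u::nat\<Rightarrow>real. \<sigma>1 (\<lambda>j. u (2*j)))"
  proof (rule continuous_on_compose2[of "cube UNIV" \<sigma>1 "cube UNIV" "\<lambda>u j. u (2*j)"])
    show "continuous_on (cube UNIV) \<sigma>1" using 1(2) by (simp add: goods_def)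
    show "continuous_on (cube UNIV) (\<lambda>u::nat\<Rightarrow>real. \<lambda>j. u (2*j))" by (rule reidx_cont)
    show "(\<lambda>u::nat\<Rightarrow>real. \<lambda>j. u (2*j)) ` cube UNIV \<subseteq> cube UNIV" by (rule image_subsetI) (rule reidx_cube)
  qed
  have c2: "continuous_on (cube UNIV) (\<lambda>u::nat\<Rightarrow>real. \<sigma>2 (\<lambda>j. u (2*j+1)))"
  proof (rule continuous_on_compose2[of "cube UNIV" \<sigma>2 "cube UNIV" "\<lambda>u j. u (2*j+1)"])
    show "continuous_on (cube UNIV) \<sigma>2" using 2(2) by (simp add: goods_def)
    show "continuous_on (cube UNIV) (\<lambda>u::nat\<Rightarrow>real. \<lambda>j. u (2*j+1))" by (rule reidx_cont)
    show "(\<lambda>u::nat\<Rightarrow>real. \<lambda>j. u (2*j+1)) ` cube UNIV \<subseteq> cube UNIV" by (rule image_subsetI) (rule reidx_cube)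
  qed
  have r1: "0 \<le> \<sigma>1 w \<and> \<sigma>1 w \<le> 1" if "w \<in> cube UNIV" for w using 1(2) that by (simp add: goods_def)
  have r2: "0 \<le> \<sigma>2 w \<and> \<sigma>2 w \<le> 1" if "w \<in> cube UNIV" for w using 2(2) that by (simp add: goods_def)
  have m1: "\<sigma>1 w \<le> \<sigma>1 w'" if "w \<in> cube UNIV" "w' \<in> cube UNIV" "w \<le> w'" for w w'
    using 1(2) that unfolding goods_def by blast
  have m2: "\<sigma>2 w \<le> \<sigma>2 w'" if "w \<in> cube UNIV" "w' \<in> cube UNIV" "w \<le> w'" for w w'
    using 2(2) that unfolding goods_def by blast
  have g: "goods \<sigma>"
    unfolding goods_def
  proof (intro conjI ballI impI)
    show "continuous_on (cube UNIV) \<sigma>" unfolding \<sigma>_def by (rule cnt[OF c1 c2])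
  next
    fix u :: "nat \<Rightarrow> real" assume u: "u \<in> cube UNIV"
    have a: "0 \<le> \<sigma>1 (\<lambda>j. u (2*j))" "\<sigma>1 (\<lambda>j. u (2*j)) \<le> 1" using r1[OF reidx_cube[OF u]] by auto
    have b: "0 \<le> \<sigma>2 (\<lambda>j. u (2*j+1))" "\<sigma>2 (\<lambda>j. u (2*j+1)) \<le> 1" using r2[OF reidx_cube[OF u]] by auto
    have "0 \<le> \<sigma> u \<and> \<sigma> u \<le> 1" unfolding \<sigma>_def by (rule rng[OF a b])
    then show "0 \<le> \<sigma> u" "\<sigma> u \<le> 1" by auto
  next
    fix u v :: "nat \<Rightarrow> real" assume u: "u \<in> cube UNIV" and v: "v \<in> cube UNIV" and uv: "u \<le> v"
    show "\<sigma> u \<le> \<sigma> v" unfolding \<sigma>_def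
      by (rule mon[OF m1[OF reidx_cube[OF u] reidx_cube[OF v] reidx_le[OF uv]]
                      m2[OF reidx_cube[OF u] reidx_cube[OF v] reidx_le[OF uv]]])
  qed
  have eq: "\<phi> (F K) (G K) = \<sigma> (\<lambda>j. atom (hs j) (bs j) K)" if K: "K \<in> Vc (cube X)" for K
  proof -
    have e1: "(\<lambda>j. atom (hs (2*j)) (bs (2*j)) K) = (\<lambda>j. atom (hs1 j) (bs1 j) K)"
      by (simp add: hs_def bs_def)
    have e2: "(\<lambda>j. atom (hs (2*j+1)) (bs (2*j+1)) K) = (\<lambda>j. atom (hs2 j) (bs2 j) K)"
      by (simp add: hs_def bs_def)
    show ?thesis unfolding \<sigma>_def e1 e2 using 1(3) 2(3) K by simp
  qed
  show ?thesis unfolding rep_def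
    by (rule exI[of _ hs], rule exI[of _ bs], rule exI[of _ \<sigma>]) (use hs g eq in blast)
qed

lemma rep_max: assumes "rep X F" "rep X G" shows "rep X (\<lambda>K. max (F K) (G K))"
proof (rule rep_bin[OF assms])
  show "0 \<le> max x y \<and> max x y \<le> 1" if "0 \<le> x" "x \<le> 1" "0 \<le> y" "y \<le> 1" for x y :: real
    using that by simp
  show "max x y \<le> max x' y'" if "x \<le> x'" "y \<le> y'" for x y x' y' :: real
    using that by linarith
  show "continuous_on S (\<lambda>u. max (f u) (g u))" if "continuous_on S f" "continuous_on S g"
    for f g :: "(nat \<Rightarrow> real) \<Rightarrow> real" and S
    using that by (rule continuous_on_max)
qed

lemma rep_min: assumes "rep X F" "rep X G" shows "rep X (\<lambda>K. min (F K) (G K))"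
proof (rule rep_bin[OF assms])
  show "0 \<le> min x y \<and> min x y \<le> 1" if "0 \<le> x" "x \<le> 1" "0 \<le> y" "y \<le> 1" for x y :: real
    using that by simp
  show "min x y \<le> min x' y'" if "x \<le> x'" "y \<le> y'" for x y x' y' :: real
    using that by linarith
  show "continuous_on S (\<lambda>u. min (f u) (g u))" if "continuous_on S f" "continuous_on S g"
    for f g :: "(nat \<Rightarrow> real) \<Rightarrow> real" and S
    using that by (rule continuous_on_min)
qed

lemma rep_Min:
  assumes "finite D" "D \<noteq> {}" "\<forall>L\<in>D. rep X (G L)"
  shows "rep X (\<lambda>K. Min ((\<lambda>L. G L K) ` D))"
  using assms
proof (induction D rule: finite_ne_induct)
  case (singleton x) then show ?case by simp
next
  case (insert x F)
  have "(\<lambda>K. Min ((\<lambda>L. G L K) ` insert x F)) = (\<lambda>K. min (G x K) (Min ((\<lambda>L. G L K) ` F)))"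
    using insert.hyps by (simp add: Min_insert)
  then show ?case using rep_min[of X "G x" "\<lambda>K. MIN L\<in>F. G L K"] insert by simp
qed

lemma rep_Max:
  assumes "finite D" "D \<noteq> {}" "\<forall>L\<in>D. rep X (G L)"
  shows "rep X (\<lambda>K. Max ((\<lambda>L. G L K) ` D))"
  using assms
proof (induction D rule: finite_ne_induct)
  case (singleton x) then show ?case by simp
next
  case (insert x F)
  have "(\<lambda>K. Max ((\<lambda>L. G L K) ` insert x F)) = (\<lambda>K. max (G x K) (Max ((\<lambda>L. G L K) ` F)))"
    using insert.hyps by (simp add: Max_insert)
  then show ?case using rep_max[of X "G x" "\<lambda>K. MAX L\<in>F. G L K"] insert by simp
qed

lemma rep_cont:
  assumes "rep X F"
  shows "continuous_map (Vc_top (cube X)) euclideanreal F"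
proof -
  obtain hs bs \<sigma> where 1: "\<forall>j::nat. goodh X (hs j)" "goods \<sigma>" "\<forall>K\<in>Vc (cube X). F K = \<sigma> (\<lambda>j. atom (hs j) (bs j) K)"
    using assms unfolding rep_def by blast
  define G where "G K = (\<lambda>j. atom (hs j) (bs j) K)" for K
  have "continuous_map (Vc_top (cube X)) (product_topology (\<lambda>_. euclideanreal) UNIV) G"
    unfolding continuous_map_componentwise_UNIV G_def by (intro allI atom_cont 1(1)[rule_format])
  then have "continuous_map (Vc_top (cube X)) euclidean G" by (simp add: euclidean_product_topology)
  moreover have "G \<in> topspace (Vc_top (cube X)) \<rightarrow> cube UNIV"
    using atoms_cube[OF 1(1)] by (auto simp: topspace_Vc_top G_def)
  ultimately have "continuous_map (Vc_top (cube X)) (top_of_set (cube UNIV)) G"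
    by (simp add: continuous_map_in_subtopology)
  moreover have "continuous_map (top_of_set (cube UNIV)) euclideanreal \<sigma>"
    using 1(2) by (simp add: goods_def continuous_map_iff_continuous)
  ultimately have "continuous_map (Vc_top (cube X)) euclideanreal (\<sigma> \<circ> G)"
    by (rule continuous_map_compose)
  then show ?thesis
    by (rule continuous_map_eq) (use 1(3) in \<open>simp add: topspace_Vc_top G_def\<close>)
qed


lemma compact_space_cover:
  assumes "compact_space T" and Op: "\<And>x. x \<in> topspace T \<Longrightarrow> openin T (Op x) \<and> x \<in> Op x"
  shows "\<exists>D. finite D \<and> D \<subseteq> topspace T \<and> topspace T \<subseteq> \<Union>(Op ` D)"
proof -
  have c: "compactin T (topspace T)" using assms(1) by (simp add: compact_space_def)
  have op: "\<forall>U\<in>Op ` topspace T. openin T U" using Op by blast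
  have cv: "topspace T \<subseteq> \<Union>(Op ` topspace T)" using Op by blast
  obtain F where F: "finite F" "F \<subseteq> Op ` topspace T" "topspace T \<subseteq> \<Union>F"
    using c op cv unfolding compactin_def by meson
  obtain D where D: "D \<subseteq> topspace T" "finite D" "F = Op ` D"
    using finite_subset_image[OF F(1,2)] by blast
  show ?thesis using D F(3) by blast
qed

lemma approx:
  fixes f :: "('a \<Rightarrow> real) set \<Rightarrow> real"
  assumes f_cont: "continuous_map (Vc_top (cube X)) (top_of_set {0..1}) f"
    and f_mono: "\<forall>K\<in>Vc (cube X). \<forall>L\<in>Vc (cube X). egli_milner (cube X) K L \<longrightarrow> f K \<le> f L"
    and e: "0 < \<epsilon>"
  shows "\<exists>F. rep X F \<and> (\<forall>K\<in>Vc (cube X). \<bar>F K - f K\<bar> < \<epsilon>)"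
proof -
  define V where "V = Vc (cube X)"
  define T where "T = Vc_top (cube X)"
  have tT: "topspace T = V" by (simp add: T_def V_def topspace_Vc_top)
  have cT: "compact_space T" unfolding T_def by (rule Vc_compact_space)
  have fr: "0 \<le> f K \<and> f K \<le> 1" if "K \<in> V" for K
  proof -
    have "f \<in> topspace T \<rightarrow> topspace (top_of_set {0..1::real})"
      using continuous_map_funspace[OF f_cont] by (simp add: T_def)
    then have "f K \<in> {0..1}" using that tT by auto
    then show ?thesis by simp
  qed
  have fc: "continuous_map T euclideanreal f"
    using f_cont unfolding T_def continuous_map_in_subtopology by blast
  have pair: "\<exists>F. rep X F \<and> F K = f K \<and> F L \<le> f L" if K: "K \<in> V" and L: "L \<in> V" for K L
  proof (cases "f K \<le> f L")
    case True
    have "rep X (\<lambda>M. f K)" using fr[OF K] by (intro rep_const) auto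
    then show ?thesis using True by (intro exI[of _ "\<lambda>M. f K"]) simp
  next
    case False
    then have "\<not> egli_milner (cube X) K L" using f_mono K L unfolding V_def by auto
    then obtain h b where h: "goodh X h" "atom h b K = 1" "atom h b L = 0"
      using sep_atom[of K X L] K L unfolding V_def by blast
    have "rep X (\<lambda>M. f L + (f K - f L) * atom h b M)"
      using fr[OF K] fr[OF L] False by (intro rep_affine[OF h(1)]) auto
    then show ?thesis using h by (intro exI[of _ "\<lambda>M. f L + (f K - f L) * atom h b M"]) simp
  qed
  have step1: "\<exists>H. rep X H \<and> H K = f K \<and> (\<forall>M\<in>V. H M < f M + \<epsilon>)" if K: "K \<in> V" for K
  proof -
    have "\<forall>L\<in>V. \<exists>F. rep X F \<and> F K = f K \<and> F L \<le> f L" using pair K by blast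
    then obtain G where G: "\<forall>L\<in>V. rep X (G L) \<and> G L K = f K \<and> G L L \<le> f L"
      by (rule bchoice[THEN exE]) blast
    define Op where "Op L = {M \<in> topspace T. G L M - f M \<in> {..<\<epsilon>}}" for L
    have "openin T (Op L) \<and> L \<in> Op L" if L: "L \<in> topspace T" for L
    proof
      have "rep X (G L)" using G L tT by blast
      then have "continuous_map T euclideanreal (G L)" unfolding T_def by (rule rep_cont)
      then have "continuous_map T euclideanreal (\<lambda>M. G L M - f M)" using fc by (rule continuous_map_diff)
      then show "openin T (Op L)" unfolding Op_def by (rule openin_continuous_map_preimage) simp
      show "L \<in> Op L" using G L tT e unfolding Op_def by force
    qed
    then obtain D where D: "finite D" "D \<subseteq> V" "V \<subseteq> \<Union>(Op ` D)"
      using compact_space_cover[OF cT] tT by metis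
    have "{} \<in> V" by (simp add: V_def empty_Vc)
    then have Dne: "D \<noteq> {}" using D(3) by blast
    define H where "H M = Min ((\<lambda>L. G L M) ` D)" for M
    have "rep X H" unfolding H_def using D(1) Dne by (rule rep_Min) (use G D(2) in blast)
    moreover have "H K = f K"
    proof -
      have allK: "\<And>L. L \<in> D \<Longrightarrow> G L K = f K" using G D(2) by blast
      have "(\<lambda>L. G L K) ` D = (\<lambda>L. f K) ` D" by (rule image_cong[OF refl allK])
      also have "\<dots> = {f K}" using Dne by blast
      finally have "(\<lambda>L. G L K) ` D = {f K}" .
      then show ?thesis by (simp add: H_def)
    qed
    moreover have "H M < f M + \<epsilon>" if M: "M \<in> V" for M
    proof -
      obtain L where L: "L \<in> D" "M \<in> Op L" using D(3) M by blast
      have "H M \<le> G L M" unfolding H_def using D(1) L(1) by (intro Min_le) auto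
      also have "G L M < f M + \<epsilon>" using L(2) unfolding Op_def by simp
      finally show ?thesis .
    qed
    ultimately show ?thesis by blast
  qed
  then obtain H where H: "\<forall>K\<in>V. rep X (H K) \<and> H K K = f K \<and> (\<forall>M\<in>V. H K M < f M + \<epsilon>)"
    using bchoice[of V "\<lambda>K H. rep X H \<and> H K = f K \<and> (\<forall>M\<in>V. H M < f M + \<epsilon>)"] by blast
  define P where "P K = {M \<in> topspace T. f M - H K M \<in> {..<\<epsilon>}}" for K
  have "openin T (P K) \<and> K \<in> P K" if K: "K \<in> topspace T" for K
  proof
    have "rep X (H K)" using H K tT by blast
    then have "continuous_map T euclideanreal (H K)" unfolding T_def by (rule rep_cont)
    with fc have "continuous_map T euclideanreal (\<lambda>M. f M - H K M)" by (rule continuous_map_diff)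
    then show "openin T (P K)" unfolding P_def by (rule openin_continuous_map_preimage) simp
    show "K \<in> P K" using H K tT e unfolding P_def by force
  qed
  then obtain D where D: "finite D" "D \<subseteq> V" "V \<subseteq> \<Union>(P ` D)"
    using compact_space_cover[OF cT] tT by metis
  have "{} \<in> V" by (simp add: V_def empty_Vc)
  then have Dne: "D \<noteq> {}" using D(3) by blast
  define F where "F M = Max ((\<lambda>K. H K M) ` D)" for M
  have "rep X F" unfolding F_def using D(1) Dne by (rule rep_Max) (use H D(2) in blast)
  moreover have "\<bar>F M - f M\<bar> < \<epsilon>" if M: "M \<in> V" for M
  proof -
    have "F M < f M + \<epsilon>" unfolding F_def using D(1) Dne
    proof (subst Max_less_iff)
      show "\<forall>a\<in>(\<lambda>K. H K M) ` D. a < f M + \<epsilon>" using H D(2) M by blast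
    qed auto
    moreover have "f M - \<epsilon> < F M"
    proof -
      obtain K where K: "K \<in> D" "M \<in> P K" using D(3) M by blast
      have "f M - \<epsilon> < H K M" using K(2) unfolding P_def by simp
      also have "H K M \<le> F M" unfolding F_def using D(1) K(1) by (intro Max_ge) auto
      finally show ?thesis .
    qed
    ultimately show ?thesis by linarith
  qed
  ultimately show ?thesis unfolding V_def by blast
qed


lemma clamp_step: "0 \<le> e \<Longrightarrow> \<bar>max (min a (x + e)) (x - e) - x\<bar> \<le> (e::real)"
  by (simp add: max_def min_def abs_le_iff)

lemma clamp_id: "\<bar>a - x\<bar> \<le> e \<Longrightarrow> max (min a (x + e)) (x - e) = (a::real)"
  by (simp add: max_def min_def abs_le_iff)

lemma rep_limit:
  assumes F: "\<forall>n. rep X (F n)"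
    and conv: "\<forall>n. \<forall>K\<in>Vc (cube X). \<bar>F n K - f K\<bar> \<le> (1/2::real)^n"
    and fr: "\<forall>K\<in>Vc (cube X). 0 \<le> f K \<and> f K \<le> 1"
  shows "rep X f"
proof -
  define V where "V = Vc (cube X)"
  define C where "C = cube (UNIV::nat set)"
  have "\<forall>n. \<exists>p. (\<forall>j. goodh X (fst p j)) \<and> goods (snd (snd p))
           \<and> (\<forall>K\<in>V. F n K = snd (snd p) (\<lambda>j. atom (fst p j) (fst (snd p) j) K))"
  proof
    fix n
    obtain hs bs \<sigma> where "(\<forall>j::nat. goodh X (hs j))" "goods \<sigma>" "(\<forall>K\<in>Vc (cube X). F n K = \<sigma> (\<lambda>j. atom (hs j) (bs j) K))"
      using F unfolding rep_def by blast
    then show "\<exists>p. (\<forall>j. goodh X (fst p j)) \<and> goods (snd (snd p))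
           \<and> (\<forall>K\<in>V. F n K = snd (snd p) (\<lambda>j. atom (fst p j) (fst (snd p) j) K))"
      by (intro exI[of _ "(hs, bs, \<sigma>)"]) (simp add: V_def)
  qed
  then have "\<exists>P. \<forall>n. (\<forall>j. goodh X (fst (P n) j)) \<and> goods (snd (snd (P n)))
           \<and> (\<forall>K\<in>V. F n K = snd (snd (P n)) (\<lambda>j. atom (fst (P n) j) (fst (snd (P n)) j) K))"
    by (rule choice)
  then obtain P where P0: "\<forall>n. (\<forall>j. goodh X (fst (P n) j)) \<and> goods (snd (snd (P n)))
           \<and> (\<forall>K\<in>V. F n K = snd (snd (P n)) (\<lambda>j. atom (fst (P n) j) (fst (snd (P n)) j) K))"
    by (rule exE)
  have P: "\<And>n. (\<forall>j. goodh X (fst (P n) j))" "\<And>n. goods (snd (snd (P n)))"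
    "\<And>n. \<forall>K\<in>V. F n K = snd (snd (P n)) (\<lambda>j. atom (fst (P n) j) (fst (snd (P n)) j) K)"
    using P0 by simp_all
  define hs where "hs n = fst (P n)" for n
  define bs where "bs n = fst (snd (P n))" for n
  define \<sigma> where "\<sigma> n = snd (snd (P n))" for n
  have hs: "goodh X (hs n j)" for n j using P(1) by (simp add: hs_def)
  have \<sigma>g: "goods (\<sigma> n)" for n using P(2) by (simp add: \<sigma>_def)
  have Feq: "K \<in> V \<Longrightarrow> F n K = \<sigma> n (\<lambda>j. atom (hs n j) (bs n j) K)" for n K
    using P(3) by (simp add: hs_def bs_def \<sigma>_def)
  define hs' where "hs' j = hs (fst (prod_decode j)) (snd (prod_decode j))" for j
  define bs' where "bs' j = bs (fst (prod_decode j)) (snd (prod_decode j))" for j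
  define \<sigma>' where "\<sigma>' n u = \<sigma> n (\<lambda>j. u (prod_encode (n, j)))" for n u
  define e where "e n = 3 * (1/2::real)^(Suc n)" for n
  define t where "t = rec_nat (\<sigma>' 0) (\<lambda>n tn u. max (min (\<sigma>' (Suc n) u) (tn u + e n)) (tn u - e n))"
  have t0: "t 0 = \<sigma>' 0" by (simp add: t_def)
  have tS: "t (Suc n) u = max (min (\<sigma>' (Suc n) u) (t n u + e n)) (t n u - e n)" for n u
    by (simp add: t_def)
  define GG where "GG K = (\<lambda>j. atom (hs' j) (bs' j) K)" for K
  have hs': "\<forall>j. goodh X (hs' j)" using hs by (simp add: hs'_def)
  have GGC: "GG K \<in> C" if "K \<in> V" for K
    unfolding GG_def C_def by (rule atoms_cube[OF hs']) (use that in \<open>simp add: V_def\<close>)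
  have e0: "0 \<le> e n" for n by (simp add: e_def)
  have \<sigma>'cont: "continuous_on C (\<sigma>' n)" for n
    unfolding \<sigma>'_def C_def
  proof (rule continuous_on_compose2[of "cube UNIV" "\<sigma> n" "cube UNIV" "\<lambda>u j. u (prod_encode (n, j))"])
    show "continuous_on (cube UNIV) (\<sigma> n)" using \<sigma>g[of n] by (simp add: goods_def)
    show "continuous_on (cube UNIV) (\<lambda>u::nat\<Rightarrow>real. \<lambda>j. u (prod_encode (n, j)))" by (rule reidx_cont)
    show "(\<lambda>u::nat\<Rightarrow>real. \<lambda>j. u (prod_encode (n, j))) ` cube UNIV \<subseteq> cube UNIV" by (rule image_subsetI) (rule reidx_cube)
  qed
  have \<sigma>'mono: "\<sigma>' n u \<le> \<sigma>' n v" if "u \<in> C" "v \<in> C" "u \<le> v" for n u v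
  proof -
    have m: "\<sigma> n w \<le> \<sigma> n w'" if "w \<in> cube UNIV" "w' \<in> cube UNIV" "w \<le> w'" for w w'
      using \<sigma>g[of n] that unfolding goods_def by blast
    show ?thesis unfolding \<sigma>'_def
      by (rule m[OF reidx_cube reidx_cube reidx_le]) (use that in \<open>simp_all add: C_def\<close>)
  qed
  have \<sigma>'img: "\<sigma>' n (GG K) = F n K" if "K \<in> V" for n K
    using Feq[OF that] by (simp add: \<sigma>'_def GG_def hs'_def bs'_def)
  have tcont: "continuous_on C (t n)" for n
  proof (induction n)
    case 0 then show ?case using \<sigma>'cont by (simp add: t0)
  next
    case (Suc n)
    have "continuous_on C (\<lambda>u. max (min (\<sigma>' (Suc n) u) (t n u + e n)) (t n u - e n))"
      by (intro continuous_on_max continuous_on_min continuous_on_add continuous_on_diff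
            continuous_on_const \<sigma>'cont Suc.IH)
    then show ?case by (simp add: tS[abs_def])
  qed
  have tmono: "t n u \<le> t n v" if "u \<in> C" "v \<in> C" "u \<le> v" for n u v
  proof (induction n)
    case 0 then show ?case using \<sigma>'mono[OF that] by (simp add: t0)
  next
    case (Suc n)
    have "\<sigma>' (Suc n) u \<le> \<sigma>' (Suc n) v" by (rule \<sigma>'mono[OF that])
    then show ?case using Suc.IH unfolding tS by linarith
  qed
  have tstep: "\<bar>t (Suc n) u - t n u\<bar> \<le> e n" for n u
    unfolding tS by (rule clamp_step[OF e0])
  have timg: "t n (GG K) = F n K" if K: "K \<in> V" for n K
  proof (induction n)
    case 0 then show ?case using \<sigma>'img[OF K] by (simp add: t0)
  next
    case (Suc n)
    have a: "\<bar>F (Suc n) K - f K\<bar> \<le> (1/2)^(Suc n)" "\<bar>F n K - f K\<bar> \<le> (1/2)^n"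
      using conv K unfolding V_def by blast+
    have "(1/2::real)^(Suc n) + (1/2)^n = e n" by (simp add: e_def)
    then have "\<bar>F (Suc n) K - F n K\<bar> \<le> e n" using a by linarith
    then show ?case unfolding tS Suc.IH \<sigma>'img[OF K] by (rule clamp_id)
  qed
  define d where "d n u = t (Suc n) u - t n u" for n u
  have sume: "summable e"
  proof -
    have "summable (\<lambda>n. (3/2) * (1/2::real)^n)" by (intro summable_mult summable_geometric) simp
    moreover have "(\<lambda>n. (3/2) * (1/2::real)^n) = e" by (auto simp: e_def)
    ultimately show ?thesis by (simp only:)
  qed
  have dle: "norm (d n u) \<le> e n" for n u using tstep by (simp add: d_def)
  have ul: "uniform_limit C (\<lambda>N u. \<Sum>i<N. d i u) (\<lambda>u. \<Sum>i. d i u) sequentially"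
    by (rule Weierstrass_m_test[OF dle sume])
  have "continuous_on C (\<lambda>u. \<Sum>i. d i u)"
  proof (rule uniform_limit_theorem[OF _ ul])
    show "\<forall>\<^sub>F N in sequentially. continuous_on C (\<lambda>u. \<Sum>i<N. d i u)"
      unfolding d_def by (intro always_eventually allI continuous_on_sum continuous_on_diff tcont)
  qed simp
  define s0 where "s0 u = t 0 u + (\<Sum>i. d i u)" for u
  have s0cont: "continuous_on C s0" unfolding s0_def
    by (intro continuous_on_add tcont \<open>continuous_on C (\<lambda>u. \<Sum>i. d i u)\<close>)
  have tlim: "(\<lambda>N. t N u) \<longlonglongrightarrow> s0 u" for u
  proof -
    have "summable (\<lambda>i. d i u)" by (rule summable_comparison_test[OF _ sume]) (use dle in blast)
    then have "(\<lambda>N. \<Sum>i<N. d i u) \<longlonglongrightarrow> (\<Sum>i. d i u)" by (rule summable_LIMSEQ)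
    moreover have "(\<Sum>i<N. d i u) = t N u - t 0 u" for N
      unfolding d_def by (rule sum_lessThan_telescope)
    ultimately have "(\<lambda>N. t N u - t 0 u) \<longlonglongrightarrow> (\<Sum>i. d i u)" by simp
    then have "(\<lambda>N. (t N u - t 0 u) + t 0 u) \<longlonglongrightarrow> (\<Sum>i. d i u) + t 0 u"
      by (intro tendsto_add tendsto_const)
    then show ?thesis by (simp add: s0_def add.commute)
  qed
  have s0mono: "s0 u \<le> s0 v" if "u \<in> C" "v \<in> C" "u \<le> v" for u v
    by (rule LIMSEQ_le[OF tlim tlim]) (use tmono[OF that] in blast)
  have s0img: "s0 (GG K) = f K" if K: "K \<in> V" for K
  proof -
    have "(\<lambda>N. F N K - f K) \<longlonglongrightarrow> 0"
    proof (rule Lim_null_comparison)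
      show "\<forall>\<^sub>F N in sequentially. norm (F N K - f K) \<le> (1/2::real)^N"
        using conv K by (simp add: V_def)
      show "(\<lambda>N. (1/2::real)^N) \<longlonglongrightarrow> 0" by (rule LIMSEQ_power_zero) simp
    qed
    then have "(\<lambda>N. (F N K - f K) + f K) \<longlonglongrightarrow> 0 + f K" by (intro tendsto_add tendsto_const)
    then have "(\<lambda>N. t N (GG K)) \<longlonglongrightarrow> f K" using timg[OF K] by simp
    then show ?thesis by (rule LIMSEQ_unique[OF tlim])
  qed
  define sf where "sf u = max 0 (min 1 (s0 u))" for u
  have "goods sf"
    unfolding goods_def C_def[symmetric]
  proof (intro conjI ballI impI)
    show "continuous_on C sf" unfolding sf_def
      by (intro continuous_on_max continuous_on_min continuous_on_const s0cont)
    show "0 \<le> sf u" "sf u \<le> 1" for u by (auto simp: sf_def)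
    show "sf u \<le> sf v" if "u \<in> C" "v \<in> C" "u \<le> v" for u v
      using s0mono[OF that] by (simp add: sf_def max_def min_def)
  qed
  moreover have "f K = sf (GG K)" if K: "K \<in> V" for K
    using s0img[OF K] fr K by (simp add: sf_def V_def)
  ultimately show ?thesis unfolding rep_def
    by (rule_tac exI[of _ hs'], rule_tac exI[of _ bs'], rule_tac exI[of _ sf])
       (use hs' in \<open>simp add: GG_def V_def\<close>)
qed


theorem theorem5p14:
  fixes X :: "'a set"
    and f :: "('a \<Rightarrow> real) set \<Rightarrow> real"
  assumes f_cont: "continuous_map (Vc_top (cube X)) (top_of_set {0..1}) f"
    and f_mono: "\<forall>K\<in>Vc (cube X). \<forall>L\<in>Vc (cube X).
                   egli_milner (cube X) K L \<longrightarrow> f K \<le> f L"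
  shows "\<exists>(Y :: nat set) (s :: (nat \<Rightarrow> real) \<Rightarrow> real)
            (h :: nat \<Rightarrow> ('a \<Rightarrow> real) \<Rightarrow> real) (isbox :: nat \<Rightarrow> bool).
           countable Y
         \<and> continuous_map (top_of_set (cube Y)) (top_of_set {0..1}) s
         \<and> (\<forall>u\<in>cube Y. \<forall>v\<in>cube Y. u \<le> v \<longrightarrow> s u \<le> s v)
         \<and> (\<forall>y\<in>Y. continuous_map (top_of_set (cube X)) (top_of_set {0..1}) (h y)
                 \<and> (\<forall>u\<in>cube X. \<forall>v\<in>cube X. u \<le> v \<longrightarrow> h y u \<le> h y v))
         \<and> (\<forall>K\<in>Vc (cube X).
              f K = s (\<lambda>y. if y \<in> Y
                           then (if isbox y then box else diamond) (Vc_map (h y) K)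
                           else 0))"
proof -
  have fr: "\<forall>K\<in>Vc (cube X). 0 \<le> f K \<and> f K \<le> 1"
  proof
    fix K assume K: "K \<in> Vc (cube X)"
    have "f \<in> topspace (Vc_top (cube X)) \<rightarrow> topspace (top_of_set {0..1::real})"
      by (rule continuous_map_funspace[OF f_cont])
    then have "f K \<in> {0..1}" using K by (auto simp: topspace_Vc_top)
    then show "0 \<le> f K \<and> f K \<le> 1" by simp
  qed
  have "\<forall>n. \<exists>F. rep X F \<and> (\<forall>K\<in>Vc (cube X). \<bar>F K - f K\<bar> < (1/2::real)^n)"
  proof
    fix n :: nat
    show "\<exists>F. rep X F \<and> (\<forall>K\<in>Vc (cube X). \<bar>F K - f K\<bar> < (1/2::real)^n)"
      by (rule approx[OF f_cont f_mono]) simp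
  qed
  then have "\<exists>F. \<forall>n. rep X (F n) \<and> (\<forall>K\<in>Vc (cube X). \<bar>F n K - f K\<bar> < (1/2::real)^n)"
    by (rule choice)
  then obtain F where F: "\<forall>n. rep X (F n) \<and> (\<forall>K\<in>Vc (cube X). \<bar>F n K - f K\<bar> < (1/2::real)^n)"
    by (rule exE)
  have "rep X f"
  proof (rule rep_limit[OF _ _ fr])
    show "\<forall>n. rep X (F n)" using F by simp
    show "\<forall>n. \<forall>K\<in>Vc (cube X). \<bar>F n K - f K\<bar> \<le> (1/2::real)^n"
      using F by (simp add: less_imp_le)
  qed
  then obtain hs bs \<sigma> where R: "\<forall>j::nat. goodh X (hs j)" "goods \<sigma>"
      "\<forall>K\<in>Vc (cube X). f K = \<sigma> (\<lambda>j. atom (hs j) (bs j) K)"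
    unfolding rep_def by blast
  have c1: "countable (UNIV :: nat set)" by simp
  have c2: "continuous_map (top_of_set (cube UNIV)) (top_of_set {0..1}) \<sigma>"
    using R(2) unfolding goods_def continuous_map_subtopology_eu by auto
  have c3: "\<forall>u\<in>cube UNIV. \<forall>v\<in>cube UNIV. u \<le> v \<longrightarrow> \<sigma> u \<le> \<sigma> v"
    using R(2) unfolding goods_def by blast
  have c4: "\<forall>y\<in>UNIV. continuous_map (top_of_set (cube X)) (top_of_set {0..1}) (hs y)
                 \<and> (\<forall>u\<in>cube X. \<forall>v\<in>cube X. u \<le> v \<longrightarrow> hs y u \<le> hs y v)"
  proof
    fix y :: nat
    have g: "goodh X (hs y)" using R(1) by blast
    then show "continuous_map (top_of_set (cube X)) (top_of_set {0..1}) (hs y)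
                 \<and> (\<forall>u\<in>cube X. \<forall>v\<in>cube X. u \<le> v \<longrightarrow> hs y u \<le> hs y v)"
      unfolding goodh_def continuous_map_subtopology_eu by auto
  qed
  have c5: "\<forall>K\<in>Vc (cube X).
              f K = \<sigma> (\<lambda>y. if y \<in> UNIV
                           then (if bs y then box else diamond) (Vc_map (hs y) K)
                           else 0)"
    using R(3) by (simp add: atom_def)
  show ?thesis
    by (rule exI[of _ UNIV], rule exI[of _ \<sigma>], rule exI[of _ hs], rule exI[of _ bs])
       (intro conjI c1 c2 c3 c4 c5)
qed

end
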